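(* Let $b>0$, $p_0>0$, $\alpha\in(1,2)$, and let $(p_\ell)_{\ell\ge1}$ be a probability distribution on $\{1,2,\dots\}$ with $p_\ell\sim p_0\ell^{-(1+\alpha)}$ as $\ell\to\infty$. Let $k,j\in\mathbb N$ with $k\ge j\ge2$ and let $c_0>0$. For $K\ge1$ and $n\ge c_0/2$ define \[R_j(K,n)=K^\alpha nb\sum_{\ell\ge j-1}p_\ell\,\frac{\binom{Kn+\ell-k}{\ell+1-j}}{\binom{Kn+\ell}{\ell+1}},\qquad R_j(n)=\frac{p_0b}{n^{\alpha-1}}\int_0^1u^j(1-u)^{k-j}\frac{u^{1-\alpha}(1-u)^{\alpha-1}}{u^2}\,du.\] Then $R_j(K,n)\to R_j(n)$ as $K\to\infty$, uniformly in $n\ge c_0/2$.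
   Context: Binomial coefficients with non-integer upper argument are understood in the generalized sense $\binom{x}{r}=\frac{x(x-1)\cdots(x-r+1)}{r!}$ (equivalently via Gamma functions), for real $x$ and nonnegative integer $r$. *)

theory Defs
  imports "HOL-Analysis.Analysis" "HOL-Library.Landau_Symbols"
begin

definition RjK :: "(nat \<Rightarrow> real) \<Rightarrow> real \<Rightarrow> real \<Rightarrow> nat \<Rightarrow> nat \<Rightarrow> real \<Rightarrow> real \<Rightarrow> real" where
  "RjK p \<alpha> b k j K n =
     K powr \<alpha> * n * b *
     (\<Sum>i. let l = i + (j - 1) in
        p l * (((K * n + real l - real k) gchoose (l + 1 - j))
               / ((K * n + real l) gchoose (l + 1))))"

definition Rjn :: "real \<Rightarrow> real \<Rightarrow> real \<Rightarrow> nat \<Rightarrow> nat \<Rightarrow> real \<Rightarrow> real" where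
  "Rjn p0 \<alpha> b k j n =
     p0 * b / n powr (\<alpha> - 1) *
     integral {0..1} (\<lambda>u. u ^ j * (1 - u) ^ (k - j) *
                          (u powr (1 - \<alpha>) * (1 - u) powr (\<alpha> - 1)) / u ^ 2)"

end

theory Submission
  imports Defs
begin

definition ff :: "real \<Rightarrow> nat \<Rightarrow> real" where "ff x n = (\<Prod>i<n. x - real i)"

lemma gchoose_ff: "a gchoose n = ff a n / fact n"
  using gbinomial_mult_fact'[of a n] by (simp add: ff_def atLeast0LessThan field_simps)

lemma ff_add: "ff x (a + b) = ff x a * ff (x - real a) b"
  by (induction b) (auto simp: ff_def algebra_simps)

lemma ff_self: "ff (real n) n = fact n"
proof (induction n)
  case 0 then show ?case by (simp add: ff_def)
next
  case (Suc n)
  have "ff (real (Suc n)) (Suc n) = ff (real (Suc n)) (1 + n)" by simp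
  also have "\<dots> = real (Suc n) * ff (real n) n" unfolding ff_add by (simp add: ff_def)
  finally show ?case using Suc by simp
qed

lemma ff_pos: "real n < x + 1 \<Longrightarrow> 0 < ff x n"
  unfolding ff_def by (intro prod_pos) auto

lemma ratio_ff:
  assumes "j - 1 \<le> l" "j \<le> k" "1 \<le> j" "real k < N"
  shows "((N + real l - real k) gchoose (l + 1 - j)) / ((N + real l) gchoose (l + 1))
       = ff (real l + 1) j * ff (N - 1) (k - j) / ff (N + real l) k"
proof -
  define m where "m = l + 1 - j"
  define x where "x = N + real l"
  have lj: "l + 1 = m + j" using assms unfolding m_def by auto
  have km: "k + m = (l + 1) + (k - j)" using assms unfolding m_def by auto
  have e1: "ff x (k + m) = ff x k * ff (x - real k) m" by (rule ff_add)
  have e2: "ff x (k + m) = ff x (l + 1) * ff (N - 1) (k - j)"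
    unfolding km ff_add x_def by (simp add: algebra_simps)
  have e3: "fact (l + 1) = fact m * ff (real l + 1) j"
  proof -
    have "fact (l+1) = ff (real (m + j)) (j + m)" using lj ff_self[of "l+1"] by (simp add: add.commute)
    also have "\<dots> = ff (real (m+j)) j * ff (real m) m" unfolding ff_add by simp
    finally show ?thesis using lj ff_self[of m]
      by (metis mult.commute of_nat_1 of_nat_add)
  qed
  have p1: "0 < ff x k" unfolding x_def using assms by (intro ff_pos) auto
  have p2: "0 < ff x (l + 1)" unfolding x_def using assms by (intro ff_pos) auto
  have A: "ff (x - real k) m = ff x (l + 1) * ff (N - 1) (k - j) / ff x k"
    using e1 e2 p1 by (simp add: field_simps)
  have "((N + real l - real k) gchoose (l + 1 - j)) / ((N + real l) gchoose (l + 1))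
      = (ff (x - real k) m / fact m) / (ff x (l+1) / fact (l+1))"
    unfolding gchoose_ff m_def x_def by (simp add: algebra_simps)
  also have "\<dots> = (ff x (l + 1) * ff (N - 1) (k - j) / ff x k / fact m) / (ff x (l+1) / (fact m * ff (real l + 1) j))"
    unfolding A e3 ..
  also have "\<dots> = ff (real l + 1) j * ff (N - 1) (k - j) / ff x k"
    using p1 p2 by (simp add: field_simps)
  finally show ?thesis unfolding x_def .
qed

lemma ff_le_pow: assumes "\<And>i. i < n \<Longrightarrow> 0 \<le> x - real i" "x \<le> c" shows "ff x n \<le> c ^ n"
proof -
  have "ff x n \<le> (\<Prod>i<n. c)" unfolding ff_def
    by (intro prod_mono) (use assms in auto)
  then show ?thesis by simp
qed

lemma ff_ge_pow: assumes "0 \<le> c" "\<And>i. i < n \<Longrightarrow> c \<le> x - real i" shows "c ^ n \<le> ff x n"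
proof -
  have "(\<Prod>i<n. c) \<le> ff x n" unfolding ff_def
    by (intro prod_mono) (use assms in auto)
  then show ?thesis by simp
qed

definition rr :: "nat \<Rightarrow> nat \<Rightarrow> real \<Rightarrow> nat \<Rightarrow> real" where
  "rr j k N l = ff (real l + 1) j * ff (N - 1) (k - j) / ff (N + real l) k"

lemma rr_bounds:
  assumes "2 \<le> j" "j \<le> k" "j - 1 \<le> l" "2 * real k \<le> N"
  shows "0 \<le> rr j k N l" "rr j k N l \<le> 2 ^ k * ((real l + 1) / (N + real l)) ^ 2"
proof -
  have N1: "N \<ge> 4" using assms by linarith
  have a1: "0 \<le> ff (real l + 1) j" using assms by (intro less_imp_le ff_pos) auto
  have a2: "0 \<le> ff (N - 1) (k - j)" using assms by (intro less_imp_le ff_pos) auto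
  have a3: "0 < ff (N + real l) k" using assms by (intro ff_pos) auto
  show "0 \<le> rr j k N l" unfolding rr_def using a1 a2 a3 by simp
  have b1: "ff (real l + 1) j \<le> (real l + 1) ^ j"
    by (rule ff_le_pow) (use assms in auto)
  have b2: "ff (N - 1) (k - j) \<le> N ^ (k - j)"
    by (rule ff_le_pow) (use assms in auto)
  have b3: "((N + real l) / 2) ^ k \<le> ff (N + real l) k"
    by (rule ff_ge_pow) (use assms in auto)
  have pos: "0 < N + real l" using N1 by auto
  have "rr j k N l \<le> (real l + 1) ^ j * N ^ (k - j) / ((N + real l) / 2) ^ k"
    unfolding rr_def
    by (intro frac_le mult_mono b1 b2 a2 b3) (use pos N1 in auto)
  also have "\<dots> = 2 ^ k * (((real l + 1) / (N + real l)) ^ j * (N / (N + real l)) ^ (k - j))"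
  proof -
    have "(N + real l) ^ k = (N + real l) ^ j * (N + real l) ^ (k - j)"
      using assms by (simp flip: power_add)
    then show ?thesis using pos by (simp add: power_divide field_simps)
  qed
  also have "\<dots> \<le> 2 ^ k * (((real l + 1) / (N + real l)) ^ 2 * 1)"
  proof -
    have t0: "0 \<le> (real l + 1) / (N + real l)" "(real l + 1) / (N + real l) \<le> 1"
      using pos N1 by auto
    have "((real l + 1) / (N + real l)) ^ j \<le> ((real l + 1) / (N + real l)) ^ 2"
      by (rule power_decreasing) (use t0 assms in auto)
    moreover have "(N / (N + real l)) ^ (k - j) \<le> 1"
      by (rule power_le_one) (use pos N1 in auto)
    ultimately show ?thesis
      by (intro mult_left_mono mult_mono) (use t0 pos N1 in auto)
  qed
  finally show "rr j k N l \<le> 2 ^ k * ((real l + 1) / (N + real l)) ^ 2" by simp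
qed

definition II :: "real \<Rightarrow> nat \<Rightarrow> real set" where
  "II N l = {real l / (N + real l) ..< (real l + 1) / (N + real l + 1)}"

lemma II_iff:
  assumes "N > 0"
  shows "u \<in> II N l \<longleftrightarrow> (0 \<le> u \<and> u < 1 \<and> real l \<le> N * u / (1 - u) \<and> N * u / (1 - u) < real l + 1)"
proof -
  have p1: "0 < N + real l" "0 < N + real l + 1" using assms by auto
  have "u \<in> II N l \<longleftrightarrow> real l \<le> u * (N + real l) \<and> u * (N + real l + 1) < real l + 1"
    unfolding II_def using p1 by (simp add: divide_le_eq less_divide_eq)
  also have "\<dots> \<longleftrightarrow> (0 \<le> u \<and> u < 1 \<and> real l \<le> N * u / (1 - u) \<and> N * u / (1 - u) < real l + 1)"
  proof
    assume h: "real l \<le> u * (N + real l) \<and> u * (N + real l + 1) < real l + 1"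
    have u0: "0 \<le> u" using h p1 by (metis mult_less_0_iff of_nat_0_le_iff order.strict_trans1 not_le)
    have u1: "u < 1"
    proof (rule ccontr)
      assume "\<not> u < 1"
      then have a: "N + real l + 1 \<le> u * (N + real l + 1)"
        using mult_right_mono[of 1 u "N + real l + 1"] p1 by simp
      moreover have "u * (N + real l + 1) < real l + 1" using h by blast
      ultimately show False using assms by linarith
    qed
    then have "0 < 1 - u" by simp
    then show "0 \<le> u \<and> u < 1 \<and> real l \<le> N * u / (1 - u) \<and> N * u / (1 - u) < real l + 1"
      using h u0 u1 by (simp add: le_divide_eq divide_less_eq algebra_simps)
  next
    assume h: "0 \<le> u \<and> u < 1 \<and> real l \<le> N * u / (1 - u) \<and> N * u / (1 - u) < real l + 1"
    then have "0 < 1 - u" by simp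
    then have "real l * (1 - u) \<le> N * u" "N * u < (real l + 1) * (1 - u)"
      using h by (simp_all add: le_divide_eq divide_less_eq)
    then show "real l \<le> u * (N + real l) \<and> u * (N + real l + 1) < real l + 1"
      by (simp add: algebra_simps)
  qed
  finally show ?thesis .
qed

lemma II_unique:
  assumes "N > 0" "u \<in> II N l"
  shows "l = nat \<lfloor>N * u / (1 - u)\<rfloor>"
proof -
  have h: "real l \<le> N * u / (1 - u)" "N * u / (1 - u) < real l + 1"
    using II_iff[OF assms(1)] assms(2) by auto
  then have "\<lfloor>N * u / (1 - u)\<rfloor> = int l" by (simp add: floor_eq_iff)
  then show ?thesis by simp
qed

lemma II_mem:
  assumes "N > 0" "0 \<le> u" "u < 1"
  shows "u \<in> II N (nat \<lfloor>N * u / (1 - u)\<rfloor>)"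
proof -
  have "0 \<le> N * u / (1 - u)" using assms by auto
  then show ?thesis using assms unfolding II_iff[OF assms(1)]
    by (auto simp: of_nat_nat floor_le_iff)
qed

lemma II_sub:
  assumes "N > 0" "1 \<le> l"
  shows "II N l \<subseteq> {0<..<1}"
proof
  fix u assume u: "u \<in> II N l"
  then have "0 \<le> u" "u < 1" using II_iff[OF assms(1)] by auto
  moreover have "0 < real l / (N + real l)" using assms by auto
  ultimately show "u \<in> {0<..<1}" using u unfolding II_def by auto
qed

lemma measure_II:
  assumes "N > 0"
  shows "measure lborel (II N l) = N / ((N + real l) * (N + real l + 1))"
proof -
  have p1: "0 < N + real l" "0 < N + real l + 1" using assms by auto
  have e: "(real l + 1) / (N + real l + 1) - real l / (N + real l) = N / ((N + real l) * (N + real l + 1))"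
    using p1 by (simp add: field_simps)
  have "0 \<le> N / ((N + real l) * (N + real l + 1))" using p1 assms by auto
  then have le: "real l / (N + real l) \<le> (real l + 1) / (N + real l + 1)" using e by linarith
  show ?thesis unfolding II_def measure_def using le e
    by (simp add: emeasure_lborel_Ico)
qed


lemma ff_scale: "N \<noteq> 0 \<Longrightarrow> ff x n = N ^ n * (\<Prod>i<n. x / N - real i * (1 / N))"
  by (induction n) (auto simp: ff_def field_simps)

lemma aux_cancel: "A \<noteq> 0 \<Longrightarrow> N \<noteq> 0 \<Longrightarrow> (N / A) * (X * (A / N)) = (X::real)"
  by (simp add: field_simps)

lemma aux_rearr: "e \<noteq> 0 \<Longrightarrow> N \<noteq> 0 \<Longrightarrow>
  A * (P * B) * (c * (d / e) ^ 2) * (e * (e + 1) / N) = c * P * (A / N) * B * (d ^ 2 * ((e + 1) / e))"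
  for A B P c d e N :: real
  by (simp add: field_simps power2_eq_square)

locale L =
  fixes p :: "nat \<Rightarrow> real" and \<alpha> p0 :: real and j k :: nat
  assumes al1: "1 < \<alpha>" and al2: "\<alpha> < 2" and p0: "p0 > 0"
    and pnn: "\<forall>l\<ge>1. p l \<ge> 0"
    and asy: "p \<sim>[at_top] (\<lambda>l. p0 * real l powr (-(1 + \<alpha>)))"
    and j2: "2 \<le> j" and jk: "j \<le> k"

context L
begin

lemma q_lim: "((\<lambda>l. p l * real l powr (1 + \<alpha>)) \<longlongrightarrow> p0) at_top"
proof -
  let ?g = "\<lambda>l. p0 * real l powr (-(1 + \<alpha>))"
  let ?h = "\<lambda>l. if p l = 0 \<and> ?g l = 0 then 1 else p l / ?g l"
  have h: "(?h \<longlongrightarrow> 1) at_top" by (rule asymp_equivD[OF asy])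
  then have "((\<lambda>l. p0 * ?h l) \<longlongrightarrow> p0 * 1) at_top" by (intro tendsto_intros)
  moreover have "eventually (\<lambda>l. p0 * ?h l = p l * real l powr (1 + \<alpha>)) at_top"
    using eventually_ge_at_top[of "1::nat"]
  proof eventually_elim
    case (elim l)
    have "?g l > 0" using elim p0 by auto
    then have "?h l = p l / ?g l" using elim by auto
    have e: "real l powr (-(1 + \<alpha>)) = 1 / real l powr (1 + \<alpha>)"
      by (subst powr_minus) (simp add: divide_inverse)
    have "real l powr (1 + \<alpha>) > 0" using elim by auto
    then show ?case using p0 elim \<open>?h l = p l / ?g l\<close> unfolding e by (simp add: field_simps)
  qed
  ultimately show ?thesis by (simp add: tendsto_cong)
qed

lemma P_bound: "\<exists>P>0. \<forall>l\<ge>1. p l \<le> P * real l powr (-(1 + \<alpha>))"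
proof -
  have "Bseq (\<lambda>l. p l * real l powr (1 + \<alpha>))"
    using q_lim convergent_imp_Bseq convergent_def by blast
  then obtain P where P: "P > 0" "\<And>l. norm (p l * real l powr (1 + \<alpha>)) \<le> P"
    unfolding Bseq_def by blast
  have "p l \<le> P * real l powr (-(1 + \<alpha>))" if "l \<ge> 1" for l
  proof -
    have pos: "real l powr (1 + \<alpha>) > 0" using that by auto
    have "p l * real l powr (1 + \<alpha>) \<le> P" using P(2)[of l] by auto
    then have "p l \<le> P / real l powr (1 + \<alpha>)" using pos by (simp add: le_divide_eq)
    also have "P / real l powr (1 + \<alpha>) = P * real l powr (-(1 + \<alpha>))"
      by (subst powr_minus) (simp add: divide_inverse)
    finally show ?thesis .
  qed
  then show ?thesis using P by blast
qed

definition vv :: "real \<Rightarrow> nat \<Rightarrow> real" where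
  "vv N l = N powr \<alpha> * p l * rr j k N l * ((N + real l) * (N + real l + 1) / N)"

definition GG :: "real \<Rightarrow> real \<Rightarrow> real" where
  "GG N u = (\<Sum>i. indicator (II N (i + (j - 1))) u * vv N (i + (j - 1)))"

definition SS :: "real \<Rightarrow> real" where
  "SS N = (\<Sum>i. let l = i + (j - 1) in
        p l * (((N + real l - real k) gchoose (l + 1 - j))
               / ((N + real l) gchoose (l + 1))))"

lemma vv_nonneg: "2 * real k \<le> N \<Longrightarrow> j - 1 \<le> l \<Longrightarrow> 0 \<le> vv N l"
  unfolding vv_def using rr_bounds(1)[OF j2 jk, of l N] pnn j2 jk
  by (intro mult_nonneg_nonneg divide_nonneg_pos) auto

lemma GG_integral:
  assumes N: "2 * real k \<le> N"
  shows "integrable lborel (GG N)" "integral\<^sup>L lborel (GG N) = N powr \<alpha> * SS N"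
proof -
  have N0: "N > 0" using N j2 jk by linarith
  define f where "f i u = indicator (II N (i + (j - 1))) u * vv N (i + (j - 1))" for i u
  have intf: "integrable lborel (f i)" for i
  proof -
    have "integrable lborel (indicator (II N (i + (j - 1))) :: real \<Rightarrow> real)"
    proof (intro integrable_real_indicator)
      have "emeasure lborel (II N (i + (j - 1))) \<le> emeasure lborel {0..1::real}"
        by (intro emeasure_mono) (use II_iff[OF N0] in auto)
      then show "emeasure lborel (II N (i + (j - 1))) < \<infinity>" by (simp add: le_less_trans)
    qed (auto simp: II_def)
    then show ?thesis unfolding f_def by simp
  qed
  have intval: "integral\<^sup>L lborel (f i) = N powr \<alpha> * (let l = i + (j - 1) in
        p l * (((N + real l - real k) gchoose (l + 1 - j)) / ((N + real l) gchoose (l + 1))))" for i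
  proof -
    define l where "l = i + (j - 1)"
    have "integral\<^sup>L lborel (f i) = measure lborel (II N l) * vv N l"
      unfolding f_def l_def by simp
    also have "\<dots> = N powr \<alpha> * p l * rr j k N l"
    proof -
      have "(N + real l) * (N + real l + 1) > 0" using N0 by auto
      then show ?thesis unfolding measure_II[OF N0] vv_def using N0 by (intro aux_cancel) auto
    qed
    also have "rr j k N l = ((N + real l - real k) gchoose (l + 1 - j)) / ((N + real l) gchoose (l + 1))"
      unfolding rr_def by (rule ratio_ff[symmetric]) (use j2 jk N l_def in auto)
    finally show ?thesis unfolding l_def Let_def by simp
  qed
  have summ: "summable (\<lambda>i. norm (f i u))" for u
  proof (rule summable_finite)
    show "finite {nat \<lfloor>N * u / (1 - u)\<rfloor> - (j - 1)}" by simp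
    fix i assume "i \<notin> {nat \<lfloor>N * u / (1 - u)\<rfloor> - (j - 1)}"
    then have "u \<notin> II N (i + (j - 1))" using II_unique[OF N0, of u "i + (j - 1)"] by auto
    then show "norm (f i u) = 0" unfolding f_def by simp
  qed
  obtain P where P: "P > 0" "\<And>l. l \<ge> 1 \<Longrightarrow> p l \<le> P * real l powr (-(1 + \<alpha>))"
    using P_bound by blast
  have summ2: "summable (\<lambda>i. \<integral>u. norm (f i u) \<partial>lborel)"
  proof (rule summable_comparison_test)
    have "summable (\<lambda>i. real (i + (j - 1)) powr (-(1 + \<alpha>)))"
      using summable_iff_shift[of "\<lambda>n. real n powr (-(1 + \<alpha>))" "j - 1"] summable_real_powr_iff al1
      by simp
    then show "summable (\<lambda>i. N powr \<alpha> * P * 2 ^ k * real (i + (j - 1)) powr (-(1 + \<alpha>)))"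
      by (simp add: summable_mult mult.assoc)
    show "\<exists>N'. \<forall>n\<ge>N'. norm (\<integral>u. norm (f n u) \<partial>lborel) \<le> N powr \<alpha> * P * 2 ^ k * real (n + (j - 1)) powr (-(1 + \<alpha>))"
    proof (intro exI allI impI)
      fix i :: nat
      define l where "l = i + (j - 1)"
      have l1: "l \<ge> 1" "j - 1 \<le> l" using j2 l_def by auto
      have fn: "norm (f i u) = f i u" for u
        unfolding f_def using vv_nonneg[OF N l1(2)] l_def by simp
      have "(\<integral>u. norm (f i u) \<partial>lborel) = N powr \<alpha> * p l * rr j k N l"
      proof -
        have "(\<integral>u. norm (f i u) \<partial>lborel) = (\<integral>u. f i u \<partial>lborel)"
          by (simp only: fn)
        also have "\<dots> = measure lborel (II N l) * vv N l"
          unfolding f_def l_def by simp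
        also have "\<dots> = N powr \<alpha> * p l * rr j k N l"
        proof -
          have "(N + real l) * (N + real l + 1) > 0" using N0 by auto
          then show ?thesis unfolding measure_II[OF N0] vv_def using N0 by (intro aux_cancel) auto
        qed
        finally show ?thesis .
      qed
      moreover have "0 \<le> N powr \<alpha> * p l * rr j k N l"
        using rr_bounds(1)[OF j2 jk l1(2) N] pnn l1 by simp
      moreover have "N powr \<alpha> * p l * rr j k N l \<le> N powr \<alpha> * (P * real l powr (-(1 + \<alpha>))) * 2 ^ k"
      proof -
        have r1: "rr j k N l \<le> 2 ^ k"
        proof -
          have "((real l + 1) / (N + real l)) ^ 2 \<le> 1"
            using N0 N j2 jk by (intro power_le_one) auto
          then show ?thesis using rr_bounds(2)[OF j2 jk l1(2) N]
            by (smt (verit) mult_left_mono mult_cancel_left1 zero_le_power)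
        qed
        show ?thesis
          by (intro mult_mono mult_left_mono P(2) l1 r1 rr_bounds(1)[OF j2 jk l1(2) N])
             (use pnn l1 P in auto)
      qed
      ultimately show "norm (\<integral>u. norm (f i u) \<partial>lborel) \<le> N powr \<alpha> * P * 2 ^ k * real (i + (j - 1)) powr (-(1 + \<alpha>))"
        unfolding l_def by (simp add: ac_simps)
    qed
  qed
  have GGf: "GG N = (\<lambda>u. \<Sum>i. f i u)" unfolding GG_def f_def by auto
  show "integrable lborel (GG N)" unfolding GGf
    by (rule integrable_suminf[OF intf]) (use summ summ2 in auto)
  have "(\<lambda>i. integral\<^sup>L lborel (f i)) sums integral\<^sup>L lborel (GG N)" unfolding GGf
    by (rule sums_integral[OF intf]) (use summ summ2 in auto)
  then have "(\<lambda>i. N powr \<alpha> * (let l = i + (j - 1) in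
        p l * (((N + real l - real k) gchoose (l + 1 - j)) / ((N + real l) gchoose (l + 1)))))
        sums integral\<^sup>L lborel (GG N)" unfolding intval .
  then have "(\<lambda>i. (let l = i + (j - 1) in
        p l * (((N + real l - real k) gchoose (l + 1 - j)) / ((N + real l) gchoose (l + 1)))))
        sums (integral\<^sup>L lborel (GG N) / N powr \<alpha>)"
    using sums_divide[where c="N powr \<alpha>"] N0 by fastforce
  then have "SS N = integral\<^sup>L lborel (GG N) / N powr \<alpha>" unfolding SS_def by (rule sums_unique[symmetric])
  then show "integral\<^sup>L lborel (GG N) = N powr \<alpha> * SS N" using N0 by simp
qed

lemma vv_bound:
  assumes N: "2 * real k \<le> N" and l: "j - 1 \<le> l" and u: "u \<in> II N l"
    and P: "P > 0" "\<And>l. l \<ge> 1 \<Longrightarrow> p l \<le> P * real l powr (-(1 + \<alpha>))"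
  shows "vv N l \<le> 2 ^ (k + 4) * P * u powr (1 - \<alpha>)"
proof -
  have N0: "N > 0" using N j2 jk by linarith
  have l1: "l \<ge> 1" using l j2 by linarith
  define L where "L = real l"
  have L0: "L \<ge> 1" using l1 L_def by simp
  have NL: "N + L > 0" using N0 L0 by simp
  have r0: "0 \<le> rr j k N l" and r1: "rr j k N l \<le> 2 ^ k * ((L + 1) / (N + L)) ^ 2"
    using rr_bounds[OF j2 jk l N] L_def by auto
  have p0': "0 \<le> p l" and p1: "p l \<le> P * L powr (-(1 + \<alpha>))" using pnn l1 P(2)[OF l1] L_def by auto
  define X where "X = 2 ^ k * P * (N powr \<alpha> / N) * L powr (-(1 + \<alpha>))"
  have X0: "X \<ge> 0" unfolding X_def using P N0 by simp
  have "vv N l = N powr \<alpha> * p l * rr j k N l * ((N + L) * (N + L + 1) / N)"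
    unfolding vv_def L_def ..
  also have "\<dots> \<le> N powr \<alpha> * (P * L powr (-(1 + \<alpha>))) * (2 ^ k * ((L + 1) / (N + L)) ^ 2) * ((N + L) * (N + L + 1) / N)"
    by (intro mult_right_mono mult_mono mult_left_mono p1 r1 r0) (use N0 NL P p0' in auto)
  also have "\<dots> = X * ((L + 1) ^ 2 * ((N + L + 1) / (N + L)))"
    unfolding X_def using N0 NL by (intro aux_rearr) auto
  also have "\<dots> \<le> X * ((4 * L ^ 2) * 2)"
  proof (intro mult_left_mono mult_mono X0)
    have "1 * L \<le> L * L" using L0 by (intro mult_right_mono) auto
    moreover have "(L + 1) ^ 2 = L * L + 2 * L + 1" "4 * L ^ 2 = 4 * (L * L)"
      by (simp_all add: power2_eq_square algebra_simps)
    ultimately show "(L + 1) ^ 2 \<le> 4 * L ^ 2" using L0 by linarith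
    show "(N + L + 1) / (N + L) \<le> 2" using NL L0 N0 by (simp add: divide_le_eq)
  qed (use NL L0 in auto)
  also have "\<dots> = 2 ^ (k + 3) * P * ((N powr \<alpha> / N) * (L powr (-(1 + \<alpha>)) * L powr 2))"
    unfolding X_def using L0 by (simp add: powr_realpow power_add)
  also have "(N powr \<alpha> / N) * (L powr (-(1 + \<alpha>)) * L powr 2) = (L / N) powr (1 - \<alpha>)"
  proof -
    have "L powr (-(1 + \<alpha>)) * L powr 2 = L powr (1 - \<alpha>)"
      by (simp flip: powr_add)
    moreover have "N powr \<alpha> / N = 1 / N powr (1 - \<alpha>)"
      using N0 by (simp add: powr_diff)
    ultimately show ?thesis by (simp add: powr_divide)
  qed
  also have "(L / N) powr (1 - \<alpha>) \<le> 2 * u powr (1 - \<alpha>)"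
  proof -
    have u0: "u > 0" using II_sub[OF N0 l1] u by auto
    have "u < (L + 1) / (N + L + 1)" using u unfolding II_def L_def by auto
    also have "\<dots> \<le> (L + 1) / N" using N0 L0 by (intro divide_left_mono) auto
    also have "\<dots> \<le> 2 * L / N" using N0 L0 by (intro divide_right_mono) auto
    finally have "u \<le> 2 * (L / N)" by simp
    then have "(2 * (L / N)) powr (1 - \<alpha>) \<le> u powr (1 - \<alpha>)"
      by (intro powr_mono2') (use al1 u0 in auto)
    moreover have "(2 * (L / N)) powr (1 - \<alpha>) = 2 powr (1 - \<alpha>) * (L / N) powr (1 - \<alpha>)"
      by (rule powr_mult)
    moreover have "2 powr (1 - \<alpha>) \<ge> 2 powr (-1)"
      by (intro powr_mono) (use al2 in auto)
    moreover have "(2::real) powr (-1) = 1 / 2" by (simp add: powr_minus)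
    moreover have "1 / 2 * (L / N) powr (1 - \<alpha>) \<le> 2 powr (1 - \<alpha>) * (L / N) powr (1 - \<alpha>)"
      using calculation(3,4) by (intro mult_right_mono) auto
    ultimately show ?thesis by linarith
  qed
  also have "2 ^ (k + 3) * P * (2 * u powr (1 - \<alpha>)) = 2 ^ (k + 4) * P * u powr (1 - \<alpha>)"
    by (simp add: power_add)
  finally show ?thesis using P by simp
qed

lemma GG_out:
  assumes "N > 0" "\<not> (0 \<le> u \<and> u < 1)"
  shows "GG N u = 0"
proof -
  have "indicator (II N (i + (j - 1))) u = (0::real)" for i
    using II_iff[OF assms(1)] assms(2) by (auto simp: indicator_def)
  then show ?thesis unfolding GG_def by simp
qed

lemma GG_in:
  assumes N: "N > 0" and u: "0 \<le> u" "u < 1"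
  shows "GG N u = (if j - 1 \<le> nat \<lfloor>N * u / (1 - u)\<rfloor> then vv N (nat \<lfloor>N * u / (1 - u)\<rfloor>) else 0)"
proof -
  define l0 where "l0 = nat \<lfloor>N * u / (1 - u)\<rfloor>"
  define c where "c = (if j - 1 \<le> l0 then vv N l0 else 0)"
  have "(\<lambda>i. indicator (II N (i + (j - 1))) u * vv N (i + (j - 1))) = (\<lambda>i. if i = l0 - (j - 1) then c else 0)"
  proof
    fix i
    show "indicator (II N (i + (j - 1))) u * vv N (i + (j - 1)) = (if i = l0 - (j - 1) then c else 0)"
    proof (cases "i + (j - 1) = l0")
      case True
      then have "u \<in> II N (i + (j - 1))" using II_mem[OF N u] l0_def by simp
      then show ?thesis using True unfolding c_def by auto
    next
      case False
      then have "u \<notin> II N (i + (j - 1))" using II_unique[OF N] l0_def by auto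
      then show ?thesis using False unfolding c_def by auto
    qed
  qed
  then have "GG N u = (\<Sum>i. if i = l0 - (j - 1) then c else 0)" unfolding GG_def by simp
  also have "\<dots> = c" using sums_single[of "l0 - (j - 1)" "\<lambda>_. c"] by (simp add: sums_iff)
  finally show ?thesis unfolding c_def l0_def .
qed

lemma GG_dom:
  assumes N: "2 * real k \<le> N"
    and P: "P > 0" "\<And>l. l \<ge> 1 \<Longrightarrow> p l \<le> P * real l powr (-(1 + \<alpha>))"
  shows "norm (GG N u) \<le> indicator {0<..1} u * (2 ^ (k + 4) * P * u powr (1 - \<alpha>))"
proof -
  have N0: "N > 0" using N j2 jk by linarith
  have w0: "0 \<le> indicator {0<..1} u * (2 ^ (k + 4) * P * u powr (1 - \<alpha>))" using P by simp
  show ?thesis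
  proof (cases "0 \<le> u \<and> u < 1")
    case False
    then show ?thesis using GG_out[OF N0 False] w0 by simp
  next
    case True
    define l0 where "l0 = nat \<lfloor>N * u / (1 - u)\<rfloor>"
    show ?thesis
    proof (cases "j - 1 \<le> l0")
      case False
      then show ?thesis using GG_in[OF N0] True w0 l0_def by simp
    next
      case jl: True
      have mem: "u \<in> II N l0" using II_mem[OF N0] True l0_def by simp
      have "1 \<le> l0" using jl j2 by linarith
      then have "u \<in> {0<..<1}" using II_sub[OF N0, of l0] mem by blast
      then have ind: "indicator {0<..1} u = (1::real)" by auto
      have "GG N u = vv N l0" using GG_in[OF N0] True jl l0_def by simp
      moreover have "0 \<le> vv N l0" using vv_nonneg[OF N jl] .
      moreover have "vv N l0 \<le> 2 ^ (k + 4) * P * u powr (1 - \<alpha>)"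
        by (rule vv_bound[OF N jl mem P])
      ultimately show ?thesis using ind by simp
    qed
  qed
qed

lemma vv_scaled:
  assumes N: "N > 0" and l: "l \<ge> 1"
  shows "vv N l = (p l * real l powr (1 + \<alpha>)) * (real l / N) powr (-(1 + \<alpha>)) *
     ((\<Prod>i<j. real l / N + 1 / N - real i * (1 / N)) * (\<Prod>i<k - j. 1 - 1 / N - real i * (1 / N))
       / (\<Prod>i<k. 1 + real l / N - real i * (1 / N))) *
     ((1 + real l / N) * (1 + real l / N + 1 / N))"
proof -
  define t where "t = real l / N"
  define e where "e = 1 / N"
  define A1 where "A1 = (\<Prod>i<j. t + e - real i * e)"
  define A2 where "A2 = (\<Prod>i<k - j. 1 - e - real i * e)"
  define B where "B = (\<Prod>i<k. 1 + t - real i * e)"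
  have L0: "real l > 0" using l by simp
  have f1: "ff (real l + 1) j = N ^ j * A1"
    unfolding A1_def t_def e_def using ff_scale[of N "real l + 1" j] N by (simp add: add_divide_distrib)
  have f2: "ff (N - 1) (k - j) = N ^ (k - j) * A2"
    unfolding A2_def e_def using ff_scale[of N "N - 1" "k - j"] N by (simp add: diff_divide_distrib)
  have f3: "ff (N + real l) k = N ^ k * B"
    unfolding B_def t_def e_def using ff_scale[of N "N + real l" k] N by (simp add: add_divide_distrib)
  have Nk: "N ^ j * N ^ (k - j) = N ^ k" using jk by (simp flip: power_add)
  have rr': "rr j k N l = A1 * A2 / B"
  proof (cases "B = 0")
    case True then show ?thesis unfolding rr_def f3 by simp
  next
    case False
    have "rr j k N l = (N ^ j * N ^ (k - j)) * (A1 * A2) / (N ^ k * B)"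
      unfolding rr_def f1 f2 f3 by (simp add: ac_simps)
    also have "\<dots> = A1 * A2 / B" unfolding Nk using N False by simp
    finally show ?thesis .
  qed
  have pl: "p l = (p l * real l powr (1 + \<alpha>)) * real l powr (-(1 + \<alpha>))"
  proof -
    have "real l powr (1 + \<alpha>) * real l powr (-(1 + \<alpha>)) = 1"
      using L0 by (simp flip: powr_add)
    then show ?thesis by (simp add: mult.assoc)
  qed
  have tp: "t powr (-(1 + \<alpha>)) = real l powr (-(1 + \<alpha>)) * N powr \<alpha> * N"
  proof -
    have "t powr (-(1 + \<alpha>)) = real l powr (-(1 + \<alpha>)) / N powr (-(1 + \<alpha>))"
      unfolding t_def by (rule powr_divide)
    also have "1 / N powr (-(1 + \<alpha>)) = N powr (1 + \<alpha>)"
      by (subst powr_minus, simp only: divide_inverse inverse_inverse_eq mult_1_left)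
    then have "real l powr (-(1 + \<alpha>)) / N powr (-(1 + \<alpha>)) = real l powr (-(1 + \<alpha>)) * N powr (1 + \<alpha>)"
      by (metis times_divide_eq_right mult.right_neutral)
    also have "N powr (1 + \<alpha>) = N powr \<alpha> * N" using N by (simp add: powr_add)
    finally show ?thesis by simp
  qed
  have sc: "(N + real l) * (N + real l + 1) / N = N * ((1 + t) * (1 + t + e))"
    unfolding t_def e_def using N by (simp add: field_simps)
  have "vv N l = N powr \<alpha> * ((p l * real l powr (1 + \<alpha>)) * real l powr (-(1 + \<alpha>))) * (A1 * A2 / B) * (N * ((1 + t) * (1 + t + e)))"
    unfolding vv_def sc rr' using pl by simp
  also have "\<dots> = (p l * real l powr (1 + \<alpha>)) * t powr (-(1 + \<alpha>)) * (A1 * A2 / B) * ((1 + t) * (1 + t + e))"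
    unfolding tp by (simp add: ac_simps)
  finally show ?thesis unfolding A1_def A2_def B_def t_def e_def .
qed

end

context L begin

lemma GG_lim:
  assumes u: "0 < u" "u < 1"
  shows "((\<lambda>N. GG N u) \<longlongrightarrow> p0 * (u / (1 - u)) powr (-(1 + \<alpha>)) * ((u / (1 - u)) ^ j / (1 + u / (1 - u)) ^ k)
           * ((1 + u / (1 - u)) * (1 + u / (1 - u)))) at_top"
proof -
  define y where "y = u / (1 - u)"
  have y0: "y > 0" unfolding y_def using u by auto
  define lN where "lN N = nat \<lfloor>N * y\<rfloor>" for N
  have Nuy: "N * u / (1 - u) = N * y" for N unfolding y_def by simp
  have lN_ge: "real (lN N) \<ge> N * y - 1" "real (lN N) \<le> N * y" if "N \<ge> 0" for N
  proof -
    have "N * y \<ge> 0" using that y0 by auto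
    then show "real (lN N) \<ge> N * y - 1" "real (lN N) \<le> N * y" unfolding lN_def
      by (simp_all add: of_nat_nat)
  qed
  have ev_l: "eventually (\<lambda>N. Z \<le> lN N) at_top" for Z :: nat
  proof -
    have "eventually (\<lambda>N::real. N \<ge> (real Z + 1) / y) at_top" by (rule eventually_ge_at_top)
    moreover have "eventually (\<lambda>N::real. N \<ge> 0) at_top" by (rule eventually_ge_at_top)
    ultimately show ?thesis
    proof eventually_elim
      case (elim N)
      then have "N * y \<ge> real Z + 1" using y0 by (simp add: divide_le_eq)
      then show ?case using lN_ge(1)[OF elim(2)] by linarith
    qed
  qed
  have E2: "filterlim lN at_top at_top"
    unfolding filterlim_at_top using ev_l by blast
  have Q: "((\<lambda>N. p (lN N) * real (lN N) powr (1 + \<alpha>)) \<longlongrightarrow> p0) at_top"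
    using filterlim_compose[OF q_lim E2] by (simp add: o_def)
  have T: "((\<lambda>N. real (lN N) / N) \<longlongrightarrow> y) at_top"
  proof (rule tendsto_sandwich[where f="\<lambda>N. y - 1 / N" and h="\<lambda>N. y"])
    show "eventually (\<lambda>N. y - 1 / N \<le> real (lN N) / N) at_top"
      using eventually_gt_at_top[of "0::real"]
    proof eventually_elim
      case (elim N)
      then have "y - 1 / N = (N * y - 1) / N" by (simp add: field_simps)
      moreover have "(N * y - 1) / N \<le> real (lN N) / N"
        by (intro divide_right_mono lN_ge(1)) (use elim in auto)
      ultimately show ?case by simp
    qed
    show "eventually (\<lambda>N. real (lN N) / N \<le> y) at_top"
      using eventually_gt_at_top[of "0::real"]
    proof eventually_elim
      case (elim N)
      have "real (lN N) / N \<le> (N * y) / N"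
        by (intro divide_right_mono lN_ge(2)) (use elim in auto)
      then show ?case using elim by simp
    qed
    have "((\<lambda>N::real. 1 / N) \<longlongrightarrow> 0) at_top"
      by (intro tendsto_divide_0[OF tendsto_const] filterlim_at_top_imp_at_infinity filterlim_ident)
    from tendsto_diff[OF tendsto_const this]
    show "((\<lambda>N. y - 1 / N) \<longlongrightarrow> y) at_top" by simp
  qed simp
  have Einv: "((\<lambda>N::real. 1 / N) \<longlongrightarrow> 0) at_top"
    by (intro tendsto_divide_0[OF tendsto_const] filterlim_at_top_imp_at_infinity filterlim_ident)
  let ?F = "\<lambda>N. (p (lN N) * real (lN N) powr (1 + \<alpha>)) * (real (lN N) / N) powr (-(1 + \<alpha>)) *
     ((\<Prod>i<j. real (lN N) / N + 1 / N - real i * (1 / N)) * (\<Prod>i<k - j. 1 - 1 / N - real i * (1 / N))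
       / (\<Prod>i<k. 1 + real (lN N) / N - real i * (1 / N))) *
     ((1 + real (lN N) / N) * (1 + real (lN N) / N + 1 / N))"
  have lim1: "(?F \<longlongrightarrow> p0 * y powr (-(1 + \<alpha>)) *
     ((\<Prod>i<j. y + 0 - real i * 0) * (\<Prod>i<k - j. 1 - 0 - real i * 0)
       / (\<Prod>i<k. 1 + y - real i * 0)) * ((1 + y) * (1 + y + 0))) at_top"
  proof -
    let ?t = "\<lambda>N. real (lN N) / N" and ?e = "\<lambda>N::real. 1 / N"
    have Tp: "((\<lambda>N. ?t N powr (-(1 + \<alpha>))) \<longlongrightarrow> y powr (-(1 + \<alpha>))) at_top"
      by (rule tendsto_powr[OF T tendsto_const]) (use y0 in auto)
    have P1: "((\<lambda>N. \<Prod>i<j. ?t N + ?e N - real i * ?e N) \<longlongrightarrow> (\<Prod>i<j. y + 0 - real i * 0)) at_top"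
      by (intro tendsto_prod tendsto_diff tendsto_add tendsto_mult T Einv tendsto_const)
    have P2: "((\<lambda>N. \<Prod>i<k - j. 1 - ?e N - real i * ?e N) \<longlongrightarrow> (\<Prod>i<k - j. 1 - 0 - real i * 0)) at_top"
      by (intro tendsto_prod tendsto_diff tendsto_add tendsto_mult T Einv tendsto_const)
    have P3: "((\<lambda>N. \<Prod>i<k. 1 + ?t N - real i * ?e N) \<longlongrightarrow> (\<Prod>i<k. 1 + y - real i * 0)) at_top"
      by (intro tendsto_prod tendsto_diff tendsto_add tendsto_mult T Einv tendsto_const)
    have nz: "(\<Prod>i<k. 1 + y - real i * 0) \<noteq> 0" using y0 by simp
    have P4: "((\<lambda>N. (1 + ?t N) * (1 + ?t N + ?e N)) \<longlongrightarrow> (1 + y) * (1 + y + 0)) at_top"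
      by (intro tendsto_diff tendsto_add tendsto_mult T Einv tendsto_const)
    show ?thesis
      by (intro tendsto_mult tendsto_divide Q Tp P1 P2 P3 P4 nz)
  qed
  have eq: "p0 * y powr (-(1 + \<alpha>)) *
     ((\<Prod>i<j. y + 0 - real i * 0) * (\<Prod>i<k - j. 1 - 0 - real i * 0)
       / (\<Prod>i<k. 1 + y - real i * 0)) * ((1 + y) * (1 + y + 0))
     = p0 * y powr (-(1 + \<alpha>)) * (y ^ j / (1 + y) ^ k) * ((1 + y) * (1 + y))" by simp
  have ev: "eventually (\<lambda>N. ?F N = GG N u) at_top"
    using eventually_ge_at_top[of "max 1 (real j / y)"]
  proof eventually_elim
    case (elim N)
    have N0: "N > 0" using elim by auto
    have "N * y \<ge> real j" using elim y0 by (simp add: divide_le_eq)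
    then have "int j \<le> \<lfloor>N * y\<rfloor>" by (simp add: le_floor_iff)
    then have lj: "lN N \<ge> j" unfolding lN_def by (simp add: le_nat_iff)
    then have "j - 1 \<le> lN N" by simp
    have "GG N u = (if j - 1 \<le> nat \<lfloor>N * u / (1 - u)\<rfloor> then vv N (nat \<lfloor>N * u / (1 - u)\<rfloor>) else 0)"
      using GG_in[OF N0] u by simp
    then have "GG N u = vv N (lN N)" unfolding Nuy lN_def[symmetric] using \<open>j - 1 \<le> lN N\<close> by simp
    moreover have "lN N \<ge> 1" using lj j2 by simp
    ultimately show ?case using vv_scaled[OF N0] by simp
  qed
  show ?thesis using tendsto_cong[OF ev] lim1 unfolding eq y_def by simp
qed

definition phi :: "real \<Rightarrow> real" where
  "phi u = u ^ j * (1 - u) ^ (k - j) * (u powr (1 - \<alpha>) * (1 - u) powr (\<alpha> - 1)) / u ^ 2"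

lemma limit_eq:
  assumes u: "0 < u" "u < 1"
  shows "p0 * (u / (1 - u)) powr (-(1 + \<alpha>)) * ((u / (1 - u)) ^ j / (1 + u / (1 - u)) ^ k)
           * ((1 + u / (1 - u)) * (1 + u / (1 - u))) = p0 * phi u"
proof -
  define a where "a = u"
  define b where "b = 1 - u"
  have a0: "a > 0" and b0: "b > 0" using u a_def b_def by auto
  have y1: "1 + u / (1 - u) = 1 / b" unfolding b_def using u by (simp add: field_simps)
  have yy: "u / (1 - u) = a / b" unfolding a_def b_def ..
  have e1: "(a / b) powr (-(1 + \<alpha>)) = (a powr (1 - \<alpha>) / a ^ 2) * (b powr (\<alpha> - 1) * b ^ 2)"
  proof -
    have "(a / b) powr (-(1 + \<alpha>)) = a powr (-(1 + \<alpha>)) / b powr (-(1 + \<alpha>))" by (rule powr_divide)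
    also have "a powr (-(1 + \<alpha>)) = a powr ((1 - \<alpha>) - 2)" by (simp add: algebra_simps)
    also have "\<dots> = a powr (1 - \<alpha>) / a ^ 2" using a0 by (simp add: powr_diff powr_realpow power2_eq_square)
    also have "b powr (-(1 + \<alpha>)) = 1 / (b powr (\<alpha> - 1) * b ^ 2)"
    proof -
      have "b powr (-(1 + \<alpha>)) = inverse (b powr (1 + \<alpha>))" by (rule powr_minus)
      also have "b powr (1 + \<alpha>) = b powr ((\<alpha> - 1) + 2)" by (simp add: algebra_simps)
      also have "\<dots> = b powr (\<alpha> - 1) * b ^ 2" using b0 by (simp add: powr_add powr_realpow powr_diff power2_eq_square)
      finally show ?thesis by (simp add: divide_inverse)
    qed
    finally show ?thesis by simp
  qed
  have bk: "b ^ k = b ^ j * b ^ (k - j)" using jk by (simp flip: power_add)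
  have gen: "p0 * ((a powr (1 - \<alpha>) / a ^ 2) * (b powr (\<alpha> - 1) * b ^ 2)) * ((a / b) ^ j / (1 / b) ^ k)
      * ((1 / b) * (1 / b)) = p0 * (a ^ j * b ^ (k - j) * (a powr (1 - \<alpha>) * b powr (\<alpha> - 1)) / a ^ 2)"
    using a0 b0 bk by (simp add: field_simps power_divide power2_eq_square)
  have "p0 * (u / (1 - u)) powr (-(1 + \<alpha>)) * ((u / (1 - u)) ^ j / (1 + u / (1 - u)) ^ k)
           * ((1 + u / (1 - u)) * (1 + u / (1 - u)))
     = p0 * (a / b) powr (-(1 + \<alpha>)) * ((a / b) ^ j / (1 / b) ^ k) * ((1 / b) * (1 / b))"
  proof -
    have y1': "1 + a / b = 1 / b" using y1 yy by simp
    show ?thesis by (simp only: yy y1')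
  qed
  also have "\<dots> = p0 * (a ^ j * b ^ (k - j) * (a powr (1 - \<alpha>) * b powr (\<alpha> - 1)) / a ^ 2)"
    unfolding e1 using gen by (simp add: mult.assoc)
  finally show ?thesis unfolding phi_def a_def b_def by simp
qed

lemma II_sets [measurable]: "II N l \<in> sets lborel"
  unfolding II_def by simp

lemma GG_meas: "GG N \<in> borel_measurable lborel"
  unfolding GG_def by measurable

lemma phi_01: "phi 0 = 0" "phi 1 = 0"
  using j2 al1 unfolding phi_def by auto

lemma main_lim: "((\<lambda>N. N powr \<alpha> * SS N) \<longlongrightarrow> p0 * integral {0..1} phi) at_top"
proof -
  obtain P where P: "P > 0" "\<And>l. l \<ge> 1 \<Longrightarrow> p l \<le> P * real l powr (-(1 + \<alpha>))"
    using P_bound by blast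
  define f where "f u = indicator {0..1} u * (p0 * phi u)" for u :: real
  define w where "w u = indicator {0<..1} u * (2 ^ (k + 4) * P * u powr (1 - \<alpha>))" for u :: real
  have fm: "f \<in> borel_measurable lborel" unfolding f_def phi_def by measurable
  have wint: "integrable lborel w"
  proof -
    have "(\<lambda>u. u powr (1 - \<alpha>)) integrable_on {0<..1}"
      by (rule integrable_on_powr_from_0') (use al2 in auto)
    then have "set_integrable lebesgue {0<..1} (\<lambda>u::real. u powr (1 - \<alpha>))"
      by (intro nonnegative_absolutely_integrable_1) auto
    then have "integrable lebesgue (\<lambda>u::real. indicator {0<..1} u * u powr (1 - \<alpha>))"
      unfolding set_integrable_def by simp
    then have "integrable lborel (\<lambda>u::real. indicator {0<..1} u * u powr (1 - \<alpha>))"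
      by (subst (asm) integrable_completion) measurable
    then have "integrable lborel (\<lambda>u::real. (2 ^ (k + 4) * P) * (indicator {0<..1} u * u powr (1 - \<alpha>)))"
      by (rule integrable_mult_right)
    then show ?thesis unfolding w_def by (simp add: ac_simps)
  qed
  have lim: "AE u in lborel. ((\<lambda>N. GG N u) \<longlongrightarrow> f u) at_top"
  proof (rule AE_I2)
    fix u :: real
    show "((\<lambda>N. GG N u) \<longlongrightarrow> f u) at_top"
    proof (cases "0 < u \<and> u < 1")
      case True
      then have "f u = p0 * phi u" unfolding f_def by simp
      then show ?thesis using GG_lim[of u] limit_eq[of u] True by simp
    next
      case False
      then have f0: "f u = 0" unfolding f_def using phi_01
        by (cases "u = 0"; cases "u = 1") auto
      have "eventually (\<lambda>N. GG N u = 0) at_top"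
        using eventually_gt_at_top[of "0::real"]
      proof eventually_elim
        case (elim N)
        show ?case
        proof (cases "0 \<le> u \<and> u < 1")
          case True
          then have "u = 0" using False by auto
          then show ?thesis using GG_in[OF elim] j2 by simp
        next
          case False
          then show ?thesis using GG_out[OF elim] by simp
        qed
      qed
      then show ?thesis unfolding f0 by (rule tendsto_eventually)
    qed
  qed
  have bound: "\<forall>\<^sub>F N in at_top. AE u in lborel. norm (GG N u) \<le> w u"
    using eventually_ge_at_top[of "2 * real k"]
  proof eventually_elim
    case (elim N)
    show ?case unfolding w_def by (rule AE_I2, rule GG_dom[OF elim P])
  qed
  have T1: "((\<lambda>N. integral\<^sup>L lborel (GG N)) \<longlongrightarrow> integral\<^sup>L lborel f) at_top"
    by (rule integral_dominated_convergence_at_top[OF fm GG_meas wint lim bound])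
  have fint: "integrable lborel f"
    by (rule integrable_dominated_convergence_at_top[OF fm GG_meas wint lim bound])
  have ev: "eventually (\<lambda>N. integral\<^sup>L lborel (GG N) = N powr \<alpha> * SS N) at_top"
    using eventually_ge_at_top[of "2 * real k"] by eventually_elim (rule GG_integral(2))
  have "integral\<^sup>L lborel f = p0 * integral {0..1} phi"
  proof -
    have si: "set_integrable lborel {0..1} (\<lambda>u. p0 * phi u)"
      using fint unfolding set_integrable_def f_def by simp
    have "integral\<^sup>L lborel f = (LINT u : {0..1} | lborel. p0 * phi u)"
      unfolding f_def set_lebesgue_integral_def by simp
    also have "\<dots> = integral {0..1} (\<lambda>u. p0 * phi u)"
      by (rule set_borel_integral_eq_integral(2)[OF si])
    finally show ?thesis by simp
  qed
  then show ?thesis using tendsto_cong[OF ev] T1 by simp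
qed

end

theorem lemma5:
  fixes b p0 \<alpha> c0 :: real and p :: "nat \<Rightarrow> real" and k j :: nat
  assumes "b > 0" and "p0 > 0" and "1 < \<alpha>" and "\<alpha> < 2"
    and "\<forall>l\<ge>1. p l \<ge> 0"
    and "(\<lambda>i. p (i + 1)) sums 1"
    and "p \<sim>[at_top] (\<lambda>l. p0 * real l powr (-(1 + \<alpha>)))"
    and "2 \<le> j" and "j \<le> k"
    and "c0 > 0"
  shows "uniform_limit {n. c0 / 2 \<le> n} (\<lambda>K n. RjK p \<alpha> b k j K n) (\<lambda>n. Rjn p0 \<alpha> b k j n) at_top"
proof -
  interpret L p \<alpha> p0 j k using assms by unfold_locales auto
  define Lim where "Lim = p0 * integral {0..1} phi"
  have HL: "((\<lambda>N. N powr \<alpha> * SS N) \<longlongrightarrow> Lim) at_top" unfolding Lim_def by (rule main_lim)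
  have c2: "c0 / 2 > 0" using assms by simp
  define B where "B = b * (c0 / 2) powr (1 - \<alpha>)"
  have B0: "B > 0" unfolding B_def using assms c2 by simp
  have R1: "RjK p \<alpha> b k j K n = b * n powr (1 - \<alpha>) * ((K * n) powr \<alpha> * SS (K * n))"
    if "K > 0" "n > 0" for K n
  proof -
    have "(K * n) powr \<alpha> * n powr (1 - \<alpha>) = K powr \<alpha> * n"
      using that by (simp add: powr_mult mult.assoc flip: powr_add)
    then show ?thesis unfolding RjK_def SS_def by (simp add: ac_simps)
  qed
  have R2: "Rjn p0 \<alpha> b k j n = b * n powr (1 - \<alpha>) * Lim" if "n > 0" for n
  proof -
    have "1 / n powr (\<alpha> - 1) = n powr (1 - \<alpha>)"
      using that by (simp add: powr_minus_divide[symmetric])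
    have "Rjn p0 \<alpha> b k j n = p0 * b / n powr (\<alpha> - 1) * integral {0..1} phi"
      unfolding Rjn_def phi_def[abs_def] ..
    also have "\<dots> = b * (1 / n powr (\<alpha> - 1)) * (p0 * integral {0..1} phi)" by simp
    finally show ?thesis unfolding Lim_def \<open>1 / n powr (\<alpha> - 1) = n powr (1 - \<alpha>)\<close> .
  qed
  show ?thesis unfolding uniform_limit_iff
  proof (intro allI impI)
    fix e :: real assume e: "e > 0"
    have "eventually (\<lambda>N. dist (N powr \<alpha> * SS N) Lim < e / B) at_top"
      using HL B0 e by (simp add: tendsto_iff)
    then obtain M where M: "\<And>N. N \<ge> M \<Longrightarrow> dist (N powr \<alpha> * SS N) Lim < e / B"
      unfolding eventually_at_top_linorder by blast
    show "eventually (\<lambda>K. \<forall>n\<in>{n. c0 / 2 \<le> n}. dist (RjK p \<alpha> b k j K n) (Rjn p0 \<alpha> b k j n) < e) at_top"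
      using eventually_ge_at_top[of "max 1 (M / (c0 / 2))"]
    proof eventually_elim
      case (elim K)
      show ?case
      proof
        fix n assume "n \<in> {n. c0 / 2 \<le> n}"
        then have n: "c0 / 2 \<le> n" by simp
        have K0: "K > 0" using elim by simp
        have n0: "n > 0" using n c2 by linarith
        have "K * n \<ge> M"
        proof -
          have "M \<le> K * (c0 / 2)" using elim c2 by (simp add: divide_le_eq)
          also have "\<dots> \<le> K * n" using K0 n by (intro mult_left_mono) auto
          finally show ?thesis .
        qed
        then have d: "dist ((K * n) powr \<alpha> * SS (K * n)) Lim < e / B" by (rule M)
        have np: "n powr (1 - \<alpha>) \<le> (c0 / 2) powr (1 - \<alpha>)"
          by (rule powr_mono2') (use assms c2 n in auto)
        have "dist (RjK p \<alpha> b k j K n) (Rjn p0 \<alpha> b k j n)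
            = b * n powr (1 - \<alpha>) * dist ((K * n) powr \<alpha> * SS (K * n)) Lim"
          unfolding R1[OF K0 n0] R2[OF n0] dist_real_def using assms
          by (simp add: abs_mult flip: right_diff_distrib)
        also have "\<dots> \<le> B * dist ((K * n) powr \<alpha> * SS (K * n)) Lim"
          unfolding B_def using assms np by (intro mult_right_mono) auto
        also have "\<dots> < B * (e / B)" using d B0 by (intro mult_strict_left_mono) auto
        also have "\<dots> = e" using B0 by simp
        finally show "dist (RjK p \<alpha> b k j K n) (Rjn p0 \<alpha> b k j n) < e" .
      qed
    qed
  qed
qed

end
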